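(* Let $Q(x,u,v,y;\alpha,\beta)$ be affine-linear in each of $x,u,v,y$ and satisfy $Q(x,u,v,y;\alpha,\beta)=\varepsilon Q(x,v,u,y;\beta,\alpha)=\sigma Q(u,x,y,v;\alpha,\beta)$ with $\varepsilon,\sigma\in\{\pm1\}$. Define $g(x,u;\alpha,\beta)=QQ_{yv}-Q_yQ_v$ (evaluated at $Q=Q(x,u,v,y;\alpha,\beta)$; it is a biquadratic polynomial in $x,u$ independent of $v,y$). Then also $g(x,v;\beta,\alpha)=QQ_{yu}-Q_yQ_u$, and $g(x,u;\alpha,\beta)=g(u,x;\alpha,\beta)$. Moreover, let $f_1,f_2,f_3$ be defined by: $x_{23}=f_1(x,x_2,x_3)$ is the solution of $Q(x,x_2,x_3,x_{23};\alpha_2,\alpha_3)=0$, $x_{31}=f_2(x,x_3,x_1)$ the solution of $Q(x,x_3,x_1,x_{31};\alpha_3,\alpha_1)=0$, $x_{12}=f_3(x,x_1,x_2)$ the solution of $Q(x,x_1,x_2,x_{12};\alpha_1,\alpha_2)=0$. Then the identity $f_{3,x_2}f_{2,x_1}f_{1,x_3}=-f_{3,x_1}f_{2,x_3}f_{1,x_2}$ (notation as in the context) is equivalent to the identity $$g(x,x_1;\alpha_1,\alpha_2)g(x,x_2;\alpha_2,\alpha_3)g(x,x_3;\alpha_3,\alpha_1)=-g(x,x_1;\alpha_1,\alpha_3)g(x,x_2;\alpha_2,\alpha_1)g(x,x_3;\alpha_3,\alpha_2).$$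
   Context: $Q_y$, $Q_{yv}$ etc. denote partial derivatives of $Q$ with respect to the indicated variables. $f_{3,x_j}$ denotes the partial derivative of $f_3$ with respect to the argument occupied by $x_j$ in $f_3(x,x_1,x_2)$; similarly $f_{2,x_j}$ refers to $f_2(x,x_3,x_1)$ and $f_{1,x_j}$ to $f_1(x,x_2,x_3)$. *)

theory Defs
  imports "HOL-Analysis.Analysis"
begin

type_synonym quad = "real \<Rightarrow> real \<Rightarrow> real \<Rightarrow> real \<Rightarrow> real \<Rightarrow> real \<Rightarrow> real"
  (* Q x u v y alpha beta *)

definition affine_fun :: "(real \<Rightarrow> real) \<Rightarrow> bool" where
  "affine_fun h \<longleftrightarrow> (\<forall>t. h t = h 0 + t * (h 1 - h 0))"

definition multiaffine :: "quad \<Rightarrow> bool" where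
  "multiaffine Q \<longleftrightarrow> (\<forall>x u v y a b.
      affine_fun (\<lambda>t. Q t u v y a b) \<and> affine_fun (\<lambda>t. Q x t v y a b) \<and>
      affine_fun (\<lambda>t. Q x u t y a b) \<and> affine_fun (\<lambda>t. Q x u v t a b))"

definition gfun :: "quad \<Rightarrow> real \<Rightarrow> real \<Rightarrow> real \<Rightarrow> real \<Rightarrow> real \<Rightarrow> real \<Rightarrow> real" where
  "gfun Q x u v y a b =
     Q x u v y a b * deriv (\<lambda>v'. deriv (\<lambda>y'. Q x u v' y' a b) y) v
     - deriv (\<lambda>y'. Q x u v y' a b) y * deriv (\<lambda>v'. Q x u v' y a b) v"

definition hfun :: "quad \<Rightarrow> real \<Rightarrow> real \<Rightarrow> real \<Rightarrow> real \<Rightarrow> real \<Rightarrow> real \<Rightarrow> real" where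
  "hfun Q x u v y a b =
     Q x u v y a b * deriv (\<lambda>u'. deriv (\<lambda>y'. Q x u' v y' a b) y) u
     - deriv (\<lambda>y'. Q x u v y' a b) y * deriv (\<lambda>u'. Q x u' v y a b) u"

text \<open>g(x,u;a,b), evaluated at the representative point v = y = 0
  (the statement also asserts independence of v, y).\<close>
definition g :: "quad \<Rightarrow> real \<Rightarrow> real \<Rightarrow> real \<Rightarrow> real \<Rightarrow> real" where
  "g Q x u a b = gfun Q x u 0 0 a b"

definition sol :: "quad \<Rightarrow> real \<Rightarrow> real \<Rightarrow> real \<Rightarrow> real \<Rightarrow> real \<Rightarrow> real" where
  "sol Q a b x u v = (THE y. Q x u v y a b = 0)"

end

theory Submission
  imports Defs
begin

definition K :: "(real \<Rightarrow> real \<Rightarrow> real) \<Rightarrow> real" where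
  "K F = (F 1 1 - F 1 0 - F 0 1 + F 0 0) * F 0 0 - (F 0 1 - F 0 0) * (F 1 0 - F 0 0)"

lemma bilin:
  assumes A1: "\<And>t. affine_fun (\<lambda>y. F t y)" and A2: "\<And>y. affine_fun (\<lambda>t. F t y)"
  shows "F t y = F 0 0 + (F 1 0 - F 0 0)*t + (F 0 1 - F 0 0)*y + (F 1 1 - F 1 0 - F 0 1 + F 0 0)*t*y"
proof -
  have e1: "F t y = F t 0 + y * (F t 1 - F t 0)" using A1[of t] unfolding affine_fun_def by blast
  have e2: "F t 0 = F 0 0 + t * (F 1 0 - F 0 0)" using A2[of 0] unfolding affine_fun_def by blast
  have e3: "F t 1 = F 0 1 + t * (F 1 1 - F 0 1)" using A2[of 1] unfolding affine_fun_def by blast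
  show ?thesis unfolding e1 e2 e3 by (simp add: algebra_simps)
qed

lemma Kderiv:
  assumes A1: "\<And>t. affine_fun (\<lambda>y. F t y)" and A2: "\<And>y. affine_fun (\<lambda>t. F t y)"
  shows "F t y * deriv (\<lambda>t'. deriv (\<lambda>y'. F t' y') y) t
     - deriv (\<lambda>y'. F t y') y * deriv (\<lambda>t'. F t' y) t = K F"
proof -
  define p where "p = F 0 0"
  define q where "q = F 1 0 - F 0 0"
  define r where "r = F 0 1 - F 0 0"
  define s where "s = F 1 1 - F 1 0 - F 0 1 + F 0 0"
  have R: "\<And>t y. F t y = p + q*t + r*y + s*t*y"
    using bilin[OF A1 A2] unfolding p_def q_def r_def s_def by blast
  have d1: "\<And>t'. deriv (\<lambda>y'. F t' y') y = r + s*t'"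
    unfolding R by (rule DERIV_imp_deriv) (auto intro!: derivative_eq_intros)
  have d2: "deriv (\<lambda>t'. r + s*t') t = s"
    by (rule DERIV_imp_deriv) (auto intro!: derivative_eq_intros)
  have d3: "deriv (\<lambda>t'. F t' y) t = q + s*y"
    unfolding R by (rule DERIV_imp_deriv) (auto intro!: derivative_eq_intros)
  have KF: "K F = s*p - r*q" unfolding K_def p_def q_def r_def s_def by simp
  have "F t y * s - (r + s*t) * (q + s*y) = s*p - r*q" by (subst R) (simp add: algebra_simps)
  then show ?thesis unfolding d1 d2 d3 KF .
qed

lemma uniq:
  assumes A1: "\<And>t. affine_fun (\<lambda>y. F t y)" and A2: "\<And>y. affine_fun (\<lambda>t. F t y)"
  shows "(\<exists>!y. F t y = 0) \<longleftrightarrow> F t 1 - F t 0 \<noteq> 0"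
proof -
  have e1: "\<And>y. F t y = F t 0 + y * (F t 1 - F t 0)" using A1[of t] unfolding affine_fun_def by blast
  show ?thesis
  proof
    assume "\<exists>!y. F t y = 0"
    then show "F t 1 - F t 0 \<noteq> 0"
      by (metis add.commute add_cancel_left_left e1 mult_zero_right zero_neq_one)
  next
    assume nz: "F t 1 - F t 0 \<noteq> 0"
    show "\<exists>!y. F t y = 0"
    proof
      show "F t (- F t 0 / (F t 1 - F t 0)) = 0" using nz by (subst e1) (simp add: field_simps)
    next
      fix y assume "F t y = 0"
      then show "y = - F t 0 / (F t 1 - F t 0)" using nz e1[of y] by (simp add: field_simps)
    qed
  qed
qed

lemma solderiv:
  assumes A1: "\<And>t. affine_fun (\<lambda>y. F t y)" and A2: "\<And>y. affine_fun (\<lambda>t. F t y)"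
    and nz: "F t0 1 - F t0 0 \<noteq> 0"
  shows "deriv (\<lambda>t. THE y. F t y = 0) t0 = K F / (F t0 1 - F t0 0)^2"
proof -
  define p where "p = F 0 0"
  define q where "q = F 1 0 - F 0 0"
  define r where "r = F 0 1 - F 0 0"
  define s where "s = F 1 1 - F 1 0 - F 0 1 + F 0 0"
  have R: "\<And>t y. F t y = p + q*t + r*y + s*t*y"
    using bilin[OF A1 A2] unfolding p_def q_def r_def s_def by blast
  have KF: "K F = s*p - r*q" unfolding K_def p_def q_def r_def s_def by simp
  have den: "\<And>t. F t 1 - F t 0 = r + s*t" unfolding R by simp
  let ?S = "{t. r + s*t \<noteq> 0}"
  have op: "open ?S"
    by (rule open_Collect_neq) (auto intro!: continuous_intros)
  have t0: "t0 \<in> ?S" using nz den by simp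
  have eq: "-(p+q*t)/(r+s*t) = (THE y. F t y = 0)" if "t \<in> ?S" for t
  proof (rule sym, rule the_equality)
    show "F t (-(p+q*t)/(r+s*t)) = 0" using that unfolding R by (simp add: field_simps)
  next
    fix y assume "F t y = 0"
    then show "y = -(p+q*t)/(r+s*t)" using that unfolding R by (simp add: field_simps)
  qed
  have "((\<lambda>t. -(p+q*t)/(r+s*t)) has_field_derivative (s*p - r*q)/(r+s*t0)^2) (at t0)"
    using t0 by (auto intro!: derivative_eq_intros simp: field_simps power2_eq_square)
  then have "((\<lambda>t. THE y. F t y = 0) has_field_derivative (s*p - r*q)/(r+s*t0)^2) (at t0)"
    by (rule has_field_derivative_transform_within_open[OF _ op t0 eq])
  then show ?thesis using DERIV_imp_deriv KF den by metis
qed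

theorem proposition2:
  fixes Q :: quad and \<epsilon> \<sigma> :: real
  assumes maff: "multiaffine Q"
    and eps: "\<epsilon> \<in> {1, -1}" and sig: "\<sigma> \<in> {1, -1}"
    and sym1: "\<And>x u v y a b. Q x u v y a b = \<epsilon> * Q x v u y b a"
    and sym2: "\<And>x u v y a b. Q x u v y a b = \<sigma> * Q u x y v a b"
  shows "(\<forall>x u v y v' y' a b. gfun Q x u v y a b = gfun Q x u v' y' a b)
    \<and> (\<forall>x u v y a b. g Q x v b a = hfun Q x u v y a b)
    \<and> (\<forall>x u a b. g Q x u a b = g Q u x a b)
    \<and> (\<forall>\<alpha>1 \<alpha>2 \<alpha>3.
         let f1 = (\<lambda>x x2 x3. sol Q \<alpha>2 \<alpha>3 x x2 x3);
             f2 = (\<lambda>x x3 x1. sol Q \<alpha>3 \<alpha>1 x x3 x1);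
             f3 = (\<lambda>x x1 x2. sol Q \<alpha>1 \<alpha>2 x x1 x2);
             D = (\<lambda>x x1 x2 x3. (\<exists>!y. Q x x2 x3 y \<alpha>2 \<alpha>3 = 0)
                    \<and> (\<exists>!y. Q x x3 x1 y \<alpha>3 \<alpha>1 = 0)
                    \<and> (\<exists>!y. Q x x1 x2 y \<alpha>1 \<alpha>2 = 0))
         in (\<forall>x x1 x2 x3. D x x1 x2 x3 \<longrightarrow>
               deriv (\<lambda>t. f3 x x1 t) x2 * deriv (\<lambda>t. f2 x x3 t) x1 * deriv (\<lambda>t. f1 x x2 t) x3
               = - (deriv (\<lambda>t. f3 x t x2) x1 * deriv (\<lambda>t. f2 x t x1) x3 * deriv (\<lambda>t. f1 x t x3) x2))
            \<longleftrightarrow>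
            (\<forall>x x1 x2 x3. D x x1 x2 x3 \<longrightarrow>
               g Q x x1 \<alpha>1 \<alpha>2 * g Q x x2 \<alpha>2 \<alpha>3 * g Q x x3 \<alpha>3 \<alpha>1
               = - (g Q x x1 \<alpha>1 \<alpha>3 * g Q x x2 \<alpha>2 \<alpha>1 * g Q x x3 \<alpha>3 \<alpha>2)))"
proof -
  have a3: "\<And>x u y a b. affine_fun (\<lambda>t. Q x u t y a b)"
   and a4: "\<And>x u v a b. affine_fun (\<lambda>t. Q x u v t a b)"
   and a2: "\<And>x v y a b. affine_fun (\<lambda>t. Q x t v y a b)"
    using maff unfolding multiaffine_def by blast+
  have G: "\<And>x u v y a b. gfun Q x u v y a b = K (\<lambda>t y. Q x u t y a b)"
    unfolding gfun_def by (rule Kderiv[where F="\<lambda>t y. Q _ _ t y _ _"]) (rule a4, rule a3)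
  have H: "\<And>x u v y a b. hfun Q x u v y a b = K (\<lambda>t y. Q x t v y a b)"
    unfolding hfun_def by (rule Kderiv[where F="\<lambda>t y. Q _ t _ y _ _"]) (rule a4, rule a2)
  have ee: "\<epsilon> * \<epsilon> = 1" using eps by auto
  have ss: "\<sigma> * \<sigma> = 1" using sig by auto
  have P2: "g Q x v b a = hfun Q x u v y a b" for x u v y a b
  proof -
    have "g Q x v b a = K (\<lambda>t y. \<epsilon> * Q x t v y a b)"
      unfolding g_def G by (subst sym1) simp
    also have "\<dots> = \<epsilon> * \<epsilon> * K (\<lambda>t y. Q x t v y a b)"
      unfolding K_def by (simp add: algebra_simps)
    finally show ?thesis using ee H by simp
  qed
  have P3: "g Q x u a b = g Q u x a b" for x u a b
  proof -
    have "g Q u x a b = K (\<lambda>t y. \<sigma> * Q x u y t a b)"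
      unfolding g_def G by (subst sym2) simp
    also have "\<dots> = \<sigma> * \<sigma> * K (\<lambda>t y. Q x u t y a b)"
      unfolding K_def by (simp add: algebra_simps)
    finally show ?thesis using ss G g_def by simp
  qed
  have DV: "(\<exists>!y. Q x u v y a b = 0) \<longleftrightarrow> Q x u v 1 a b - Q x u v 0 a b \<noteq> 0" for x u v a b
    by (rule uniq[where F="\<lambda>t y. Q _ _ t y _ _"]) (rule a4, rule a3)
  have dv: "deriv (\<lambda>t. sol Q a b x u t) v = g Q x u a b / (Q x u v 1 a b - Q x u v 0 a b)^2"
    if "Q x u v 1 a b - Q x u v 0 a b \<noteq> 0" for x u v a b
    unfolding sol_def g_def G
    by (rule solderiv[where F="\<lambda>t y. Q _ _ t y _ _"]) (rule a4, rule a3, rule that)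
  have du: "deriv (\<lambda>t. sol Q a b x t v) u = g Q x v b a / (Q x u v 1 a b - Q x u v 0 a b)^2"
    if "Q x u v 1 a b - Q x u v 0 a b \<noteq> 0" for x u v a b
    unfolding sol_def P2[of x v b a u 0] H
    by (rule solderiv[where F="\<lambda>t y. Q _ t _ y _ _"]) (rule a4, rule a2, rule that)
  show ?thesis
  proof (intro conjI allI)
    show "gfun Q x u v y a b = gfun Q x u v' y' a b" for x u v y v' y' a b
      unfolding G ..
    show "g Q x v b a = hfun Q x u v y a b" for x u v y a b by (rule P2)
    show "g Q x u a b = g Q u x a b" for x u a b by (rule P3)
    fix \<alpha>1 \<alpha>2 \<alpha>3
    have pt: "(deriv (\<lambda>t. sol Q \<alpha>1 \<alpha>2 x x1 t) x2 * deriv (\<lambda>t. sol Q \<alpha>3 \<alpha>1 x x3 t) x1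
          * deriv (\<lambda>t. sol Q \<alpha>2 \<alpha>3 x x2 t) x3
        = - (deriv (\<lambda>t. sol Q \<alpha>1 \<alpha>2 x t x2) x1 * deriv (\<lambda>t. sol Q \<alpha>3 \<alpha>1 x t x1) x3
          * deriv (\<lambda>t. sol Q \<alpha>2 \<alpha>3 x t x3) x2))
      \<longleftrightarrow> (g Q x x1 \<alpha>1 \<alpha>2 * g Q x x2 \<alpha>2 \<alpha>3 * g Q x x3 \<alpha>3 \<alpha>1
               = - (g Q x x1 \<alpha>1 \<alpha>3 * g Q x x2 \<alpha>2 \<alpha>1 * g Q x x3 \<alpha>3 \<alpha>2))"
      if n3: "Q x x1 x2 1 \<alpha>1 \<alpha>2 - Q x x1 x2 0 \<alpha>1 \<alpha>2 \<noteq> 0"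
        and n2: "Q x x3 x1 1 \<alpha>3 \<alpha>1 - Q x x3 x1 0 \<alpha>3 \<alpha>1 \<noteq> 0"
        and n1: "Q x x2 x3 1 \<alpha>2 \<alpha>3 - Q x x2 x3 0 \<alpha>2 \<alpha>3 \<noteq> 0" for x x1 x2 x3
      unfolding dv[OF n3] dv[OF n2] dv[OF n1] du[OF n3] du[OF n2] du[OF n1]
      using n1 n2 n3 by (simp add: field_simps)
    show "let f1 = (\<lambda>x x2 x3. sol Q \<alpha>2 \<alpha>3 x x2 x3);
             f2 = (\<lambda>x x3 x1. sol Q \<alpha>3 \<alpha>1 x x3 x1);
             f3 = (\<lambda>x x1 x2. sol Q \<alpha>1 \<alpha>2 x x1 x2);
             D = (\<lambda>x x1 x2 x3. (\<exists>!y. Q x x2 x3 y \<alpha>2 \<alpha>3 = 0)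
                    \<and> (\<exists>!y. Q x x3 x1 y \<alpha>3 \<alpha>1 = 0)
                    \<and> (\<exists>!y. Q x x1 x2 y \<alpha>1 \<alpha>2 = 0))
         in (\<forall>x x1 x2 x3. D x x1 x2 x3 \<longrightarrow>
               deriv (\<lambda>t. f3 x x1 t) x2 * deriv (\<lambda>t. f2 x x3 t) x1 * deriv (\<lambda>t. f1 x x2 t) x3
               = - (deriv (\<lambda>t. f3 x t x2) x1 * deriv (\<lambda>t. f2 x t x1) x3 * deriv (\<lambda>t. f1 x t x3) x2))
            \<longleftrightarrow>
            (\<forall>x x1 x2 x3. D x x1 x2 x3 \<longrightarrow>
               g Q x x1 \<alpha>1 \<alpha>2 * g Q x x2 \<alpha>2 \<alpha>3 * g Q x x3 \<alpha>3 \<alpha>1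
               = - (g Q x x1 \<alpha>1 \<alpha>3 * g Q x x2 \<alpha>2 \<alpha>1 * g Q x x3 \<alpha>3 \<alpha>2))"
      unfolding Let_def DV using pt by (intro iff_allI) blast
  qed
qed

end
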